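(* Let $A$ be an $n\times n$ P-matrix and let $I$ be the $n\times n$ identity matrix. Then the $2n\times 2n$ matrix \[M=\begin{pmatrix} A & A+I\\ A-I & A\end{pmatrix}\] is also a P-matrix.
   Context: A P-matrix is a square real matrix all of whose principal minors are positive. *)

theory Defs
  imports "Jordan_Normal_Form.DL_Submatrix" "Jordan_Normal_Form.Determinant"
begin

definition P_matrix :: "real mat \<Rightarrow> bool" where
  "P_matrix A \<longleftrightarrow> A \<in> carrier_mat (dim_row A) (dim_row A) \<and>
     (\<forall>S. S \<subseteq> {0..<dim_row A} \<and> S \<noteq> {} \<longrightarrow> det (submatrix A S S) > 0)"

end

theory Submission
  imports Defs
begin


lemma block_det:
  fixes X Y Z W :: "real mat"
  assumes X: "X \<in> carrier_mat t t" and Y: "Y \<in> carrier_mat t m"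
    and Z: "Z \<in> carrier_mat m t" and W: "W \<in> carrier_mat m m"
  shows "det (four_block_mat (four_block_mat X (X + 1\<^sub>m t) (X - 1\<^sub>m t) X)
     (four_block_mat Y (0\<^sub>m t 0) Y (0\<^sub>m t 0)) (four_block_mat Z Z (0\<^sub>m 0 t) (0\<^sub>m 0 t)) W) = det W"
proof -
  define C1 where "C1 = four_block_mat X (X + 1\<^sub>m t) (X - 1\<^sub>m t) X"
  define C2 where "C2 = four_block_mat Y (0\<^sub>m t 0) Y (0\<^sub>m t 0)"
  define C3 where "C3 = four_block_mat Z Z (0\<^sub>m 0 t) (0\<^sub>m 0 t)"
  define L1 :: "real mat" where "L1 = four_block_mat (1\<^sub>m t) (0\<^sub>m t t) (- 1\<^sub>m t) (1\<^sub>m t)"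
  define R1 :: "real mat" where "R1 = four_block_mat (1\<^sub>m t) (- 1\<^sub>m t) (0\<^sub>m t t) (1\<^sub>m t)"
  define K :: "real mat" where "K = four_block_mat X (1\<^sub>m t) (- 1\<^sub>m t) (0\<^sub>m t t)"
  define Y0 :: "real mat" where "Y0 = four_block_mat Y (0\<^sub>m t 0) (0\<^sub>m t m) (0\<^sub>m t 0)"
  define Z0 :: "real mat" where "Z0 = four_block_mat Z (0\<^sub>m m t) (0\<^sub>m 0 t) (0\<^sub>m 0 t)"
  define F :: "real mat" where "F = four_block_mat (0\<^sub>m m t) Z (0\<^sub>m 0 t) (0\<^sub>m 0 t)"
  define L where "L = four_block_mat L1 (0\<^sub>m (t+t) m) (0\<^sub>m m (t+t)) (1\<^sub>m m)"
  define R where "R = four_block_mat R1 (0\<^sub>m (t+t) m) (0\<^sub>m m (t+t)) (1\<^sub>m m)"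
  define E where "E = four_block_mat (1\<^sub>m (t+t)) (0\<^sub>m (t+t) m) F (1\<^sub>m m)"
  define C where "C = four_block_mat C1 C2 C3 W"
  have cC1: "C1 \<in> carrier_mat (t+t) (t+t)" unfolding C1_def using X by auto
  have cC2: "C2 \<in> carrier_mat (t+t) m" unfolding C2_def using Y by auto
  have cC3: "C3 \<in> carrier_mat m (t+t)" unfolding C3_def using Z by auto
  have cL1: "L1 \<in> carrier_mat (t+t) (t+t)" unfolding L1_def by auto
  have cR1: "R1 \<in> carrier_mat (t+t) (t+t)" unfolding R1_def by auto
  have cK: "K \<in> carrier_mat (t+t) (t+t)" unfolding K_def using X by auto
  have cY0: "Y0 \<in> carrier_mat (t+t) m" unfolding Y0_def using Y by auto
  have cZ0: "Z0 \<in> carrier_mat m (t+t)" unfolding Z0_def using Z by auto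
  have cF: "F \<in> carrier_mat m (t+t)" unfolding F_def using Z by auto
  have cC: "C \<in> carrier_mat (t+t+m) (t+t+m)" unfolding C_def using cC1 cC2 cC3 W by auto
  have cL: "L \<in> carrier_mat (t+t+m) (t+t+m)" unfolding L_def using cL1 by auto
  have cR: "R \<in> carrier_mat (t+t+m) (t+t+m)" unfolding R_def using cR1 by auto
  have cE: "E \<in> carrier_mat (t+t+m) (t+t+m)" unfolding E_def using cF by auto
  have s1a: "L1 * C1 = four_block_mat X (X + 1\<^sub>m t) (- 1\<^sub>m t) (- 1\<^sub>m t)"
    unfolding L1_def C1_def
    apply (subst mult_four_block_mat)
    using X by (auto intro!: eq_matI)
  have s1: "L1 * C1 * R1 = K"
    unfolding s1a R1_def K_def
    apply (subst mult_four_block_mat)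
    using X by (auto intro!: eq_matI)
  have s2: "L1 * C2 = Y0"
    unfolding L1_def C2_def Y0_def
    apply (subst mult_four_block_mat)
    using Y by (auto intro!: eq_matI)
  have s3: "C3 * R1 = Z0"
    unfolding R1_def C3_def Z0_def
    apply (subst mult_four_block_mat)
    using Z by (auto intro!: eq_matI)
  have s4: "F * K + Z0 = 0\<^sub>m m (t+t)"
    unfolding F_def K_def Z0_def
    apply (subst mult_four_block_mat)
    using X Z by (auto intro!: eq_matI)
  have s5: "F * Y0 + W = W"
    unfolding F_def Y0_def
    apply (subst mult_four_block_mat)
    using Y Z W by (auto intro!: eq_matI)
  have s6: "L * C * R = four_block_mat K Y0 Z0 W"
    unfolding L_def C_def R_def
    apply (subst mult_four_block_mat[OF cL1 _ _ _ cC1 cC2 cC3 W])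
       apply auto
    apply (subst mult_four_block_mat[OF _ _ _ _ cR1])
    using cL1 cC1 cC2 cC3 W cR1 s1 s2 s3 by auto
  have s7: "E * (L * C * R) = four_block_mat K Y0 (0\<^sub>m m (t+t)) W"
    unfolding s6 E_def
    apply (subst mult_four_block_mat[OF _ _ cF _ cK cY0 cZ0 W])
    using cK cY0 cZ0 s4 s5 cF W by auto
  have dK: "det K = 1"
    unfolding K_def
    apply (subst det_four_block_mat[OF X])
    using X apply auto
    apply (subgoal_tac "0\<^sub>m t t - - 1\<^sub>m t = (1\<^sub>m t :: real mat)")
     apply simp
    by (auto intro!: eq_matI)
  have dW: "det (E * (L * C * R)) = det W"
    unfolding s7 using det_four_block_mat_lower_left_zero[OF cK cY0 _ W] dK by simp
  have dE: "det E = 1" unfolding E_def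
    by (subst det_four_block_mat_upper_right_zero[OF _ _ cF]) auto
  have dL: "det L = 1" unfolding L_def L1_def
    by (subst det_four_block_mat_upper_right_zero[OF cL1[unfolded L1_def]]; (subst det_four_block_mat_upper_right_zero)?; auto)
  have dR: "det R = 1" unfolding R_def R1_def
    by (subst det_four_block_mat_upper_right_zero[OF cR1[unfolded R1_def]]; (subst det_four_block_mat_lower_left_zero)?; auto)
  have "det C = det W"
  proof -
    have cLC: "L * C \<in> carrier_mat (t+t+m) (t+t+m)" using cL cC by auto
    have cLCR: "L * C * R \<in> carrier_mat (t+t+m) (t+t+m)" using cLC cR by auto
    have "det (E * (L * C * R)) = det E * (det L * det C * det R)"
      using det_mult[OF cE cLCR] det_mult[OF cLC cR] det_mult[OF cL cC] by simp
    then show ?thesis using dE dL dR dW by simp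
  qed
  then show ?thesis unfolding C_def C1_def C2_def C3_def .
qed



lemma det_sim_perm:
  fixes C :: "'a :: comm_ring_1 mat"
  assumes C: "C \<in> carrier_mat k k" and p: "p permutes {0..<k}"
  shows "det (mat k k (\<lambda>(i,j). C $$ (p i, p j))) = det C"
proof -
  define D where "D = mat k k (\<lambda>(i,j). C $$ (i, p j))"
  have D: "D \<in> carrier_mat k k" unfolding D_def by auto
  have pk: "i < k \<Longrightarrow> p i < k" for i using p permutes_in_image by fastforce
  have e1: "mat k k (\<lambda>(i,j). C $$ (p i, p j)) = mat k k (\<lambda>(i,j). D $$ (p i, j))"
    by (rule eq_matI, auto simp: D_def pk)
  have e2: "transpose_mat D = mat k k (\<lambda>(i,j). (transpose_mat C) $$ (p i, j))"
    by (rule eq_matI, insert C, auto simp: D_def pk)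
  have "det D = det (transpose_mat D)" using det_transpose[OF D] by simp
  also have "\<dots> = signof p * det (transpose_mat C)" unfolding e2
    by (rule det_permute_rows[OF _ p], insert C, auto)
  also have "\<dots> = signof p * det C" using det_transpose[OF C] by simp
  finally have dD: "det D = signof p * det C" .
  have "det (mat k k (\<lambda>(i,j). C $$ (p i, p j))) = signof p * det D" unfolding e1
    by (rule det_permute_rows[OF D p])
  also have "\<dots> = (signof p * signof p) * det C" using dD by simp
  also have "signof p * signof p = (1 :: 'a)"
    by (metis sign_idempotent of_int_1 of_int_mult)
  finally show ?thesis by simp
qed

lemma pick_bij:
  assumes "finite S"
  shows "bij_betw (pick S) {0..<card S} S"
proof (rule bij_betwI')
  fix x y assume "x \<in> {0..<card S}" "y \<in> {0..<card S}"
  then show "(pick S x = pick S y) = (x = y)" using card_pick_le by (metis atLeastLessThan_iff)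
next
  fix x assume "x \<in> {0..<card S}" then show "pick S x \<in> S" using pick_in_set_le by auto
next
  fix y assume y: "y \<in> S"
  have "{a\<in>S. a < y} \<subset> S" using y by auto
  then have "card {a\<in>S. a < y} < card S" using assms psubset_card_mono by auto
  then show "\<exists>x\<in>{0..<card S}. y = pick S x" using pick_card_in_set[OF y] by force
qed

lemma det_reindex:
  fixes B :: "'a :: comm_ring_1 mat"
  assumes B: "B \<in> carrier_mat N N" and S: "S \<subseteq> {0..<N}" and g: "bij_betw g {0..<k} S"
  shows "det (mat k k (\<lambda>(i,j). B $$ (g i, g j))) = det (submatrix B S S)"
proof -
  have fS: "finite S" using S finite_subset by blast
  have k: "card S = k" using bij_betw_same_card[OF g] by simp
  have setS: "{i. i < dim_row B \<and> i \<in> S} = S" "{i. i < dim_col B \<and> i \<in> S} = S" using S B by auto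
  define h where "h = pick S"
  have h: "bij_betw h {0..<k} S" using pick_bij[OF fS] k h_def by simp
  define p where "p i = (if i < k then the_inv_into {0..<k} h (g i) else i)" for i
  have hinv: "bij_betw (the_inv_into {0..<k} h) S {0..<k}" by (rule bij_betw_the_inv_into[OF h])
  have "bij_betw (the_inv_into {0..<k} h \<circ> g) {0..<k} {0..<k}" by (rule bij_betw_trans[OF g hinv])
  then have "bij_betw p {0..<k} {0..<k}"
    by (rule bij_betw_cong[THEN iffD1, rotated], auto simp: p_def)
  then have p: "p permutes {0..<k}" by (rule bij_imp_permutes, auto simp: p_def)
  have hp: "i < k \<Longrightarrow> h (p i) = g i" for i unfolding p_def
    using f_the_inv_into_f_bij_betw[OF h] g bij_betwE by fastforce
  have pk: "i < k \<Longrightarrow> p i < k" for i using p permutes_in_image by fastforce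
  define Sub where "Sub = submatrix B S S"
  have cSub: "Sub \<in> carrier_mat k k" unfolding Sub_def submatrix_def setS k by auto
  have "mat k k (\<lambda>(i,j). B $$ (g i, g j)) = mat k k (\<lambda>(i,j). Sub $$ (p i, p j))"
    by (rule eq_matI, auto simp: Sub_def submatrix_def setS k pk hp[symmetric] h_def)
  then show ?thesis using det_sim_perm[OF cSub p] Sub_def by simp
qed



lemma main_part:
  fixes A :: "real mat"
  assumes A: "A \<in> carrier_mat n n"
    and S: "S \<subseteq> {0..<n+n}"
  assumes T_def: "T = {a. a < n \<and> a \<in> S \<and> a + n \<in> S}"
  assumes Q_def: "Q = {a. a < n \<and> (a \<in> S) \<noteq> (a + n \<in> S)}"
  assumes t_def: "t = card T" and m_def: "m = card Q"
  assumes \<tau>_def: "\<tau> = pick T" and \<psi>_def: "\<psi> = pick Q"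
  assumes g_def: "g = (\<lambda>i. if i < t then \<tau> i else if i < t + t then \<tau> (i - t) + n
      else if \<psi> (i - (t+t)) \<in> S then \<psi> (i - (t+t)) else \<psi> (i - (t+t)) + n)"
  shows "bij_betw g {0..<t+t+m} S"
proof -
  have fT: "finite T" unfolding T_def by auto
  have fQ: "finite Q" unfolding Q_def by auto
  have bT: "bij_betw \<tau> {0..<t} T" using pick_bij[OF fT] t_def \<tau>_def by simp
  have bQ: "bij_betw \<psi> {0..<m} Q" using pick_bij[OF fQ] m_def \<psi>_def by simp
  show ?thesis
  proof (rule bij_betwI')
    fix x y assume x: "x \<in> {0..<t+t+m}" and y: "y \<in> {0..<t+t+m}"
    have tT: "i < t \<Longrightarrow> \<tau> i < n \<and> \<tau> i \<in> S \<and> \<tau> i + n \<in> S" for i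
      using bij_betwE[OF bT] unfolding T_def by auto
    have tQ: "j < m \<Longrightarrow> \<psi> j < n \<and> ((\<psi> j \<in> S) \<noteq> (\<psi> j + n \<in> S))" for j
      using bij_betwE[OF bQ] unfolding Q_def by auto
    have tinj: "i < t \<Longrightarrow> j < t \<Longrightarrow> \<tau> i = \<tau> j \<Longrightarrow> i = j" for i j
      using bij_betw_imp_inj_on[OF bT] unfolding inj_on_def by auto
    have qinj: "i < m \<Longrightarrow> j < m \<Longrightarrow> \<psi> i = \<psi> j \<Longrightarrow> i = j" for i j
      using bij_betw_imp_inj_on[OF bQ] unfolding inj_on_def by auto
    have tne: "i < t \<Longrightarrow> j < m \<Longrightarrow> \<tau> i \<noteq> \<psi> j" for i j
      using tT tQ by metis
    have g3: "g (j + (t+t)) = (if \<psi> j \<in> S then \<psi> j else \<psi> j + n)" for j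
      unfolding g_def by simp
    have g2: "g (j + t) = \<tau> j + n" if "j < t" for j
      unfolding g_def using that by simp
    have g1: "g j = \<tau> j" if "j < t" for j
      unfolding g_def using that by simp
    have reg: "x < t \<or> (\<exists>j. j < t \<and> x = j + t) \<or> (\<exists>j. j < m \<and> x = j + (t+t))"
      if "x < t+t+m" for x
      using that by presburger
    have "x = y" if gxy: "g x = g y" and x: "x < t+t+m" and y: "y < t+t+m" for x y
    proof -
      consider "x < t" | j where "j < t" "x = j + t" | j where "j < m" "x = j + (t+t)"
        using reg[OF x] by blast
      then show ?thesis
      proof cases
        case 1
        consider "y < t" | k where "k < t" "y = k + t" | k where "k < m" "y = k + (t+t)"
          using reg[OF y] by blast
        then show ?thesis
        proof cases
          case 1 then show ?thesis using \<open>x < t\<close> gxy g1 tinj by metis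
        next
          case 2 then show ?thesis using \<open>x < t\<close> gxy g1 g2 tT by (metis not_add_less2)
        next
          case 3 then show ?thesis using \<open>x < t\<close> gxy g1 g3[of k] tT tne
            by (metis not_add_less2)
        qed
      next
        case 2
        consider "y < t" | k where "k < t" "y = k + t" | k where "k < m" "y = k + (t+t)"
          using reg[OF y] by blast
        then show ?thesis
        proof cases
          case 1 then show ?thesis using 2 gxy g1 g2 tT by (metis not_add_less2)
        next
          case c: 2 then show ?thesis using 2 gxy g2 tinj by (metis add_right_cancel)
        next
          case c: 3 then show ?thesis using 2 gxy g2 g3[of k] tT tQ tne
            by (metis add_right_cancel not_add_less2)
        qed
      next
        case 3
        consider "y < t" | k where "k < t" "y = k + t" | k where "k < m" "y = k + (t+t)"
          using reg[OF y] by blast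
        then show ?thesis
        proof cases
          case 1 then show ?thesis using 3 gxy g1 g3[of j] tT tne
            by (metis not_add_less2)
        next
          case c: 2 then show ?thesis using 3 gxy g2 g3[of j] tT tQ tne
            by (metis add_right_cancel not_add_less2)
        next
          case c: 3 then show ?thesis using 3 gxy g3 tQ qinj
            by (metis add_right_cancel not_add_less2)
        qed
      qed
    qed
    then show "(g x = g y) = (x = y)" using x y by auto
  next
    fix x assume x: "x \<in> {0..<t+t+m}"
    show "g x \<in> S" using x bij_betwE[OF bT] bij_betwE[OF bQ] unfolding g_def T_def Q_def
      by auto
  next
    fix y assume y: "y \<in> S"
    show "\<exists>x\<in>{0..<t+t+m}. y = g x"
    proof (cases "y < n")
      case True
      show ?thesis
      proof (cases "y + n \<in> S")
        case True2: True
        then have "y \<in> T" using True y unfolding T_def by auto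
        then obtain i where i: "i < t" "\<tau> i = y" using bT by (metis atLeastLessThan_iff bij_betw_iff_bijections)
        then show ?thesis unfolding g_def by (intro bexI[of _ i]) auto
      next
        case False
        then have "y \<in> Q" using True y unfolding Q_def by auto
        then obtain i where i: "i < m" "\<psi> i = y" using bQ by (metis atLeastLessThan_iff bij_betw_iff_bijections)
        then show ?thesis unfolding g_def using y by (intro bexI[of _ "i+t+t"]) auto
      qed
    next
      case False
      define z where "z = y - n"
      have yz: "y = z + n" "z < n" using False y S unfolding z_def by auto
      show ?thesis
      proof (cases "z \<in> S")
        case True
        then have "z \<in> T" using yz y unfolding T_def by auto
        then obtain i where i: "i < t" "\<tau> i = z" using bT by (metis atLeastLessThan_iff bij_betw_iff_bijections)
        then show ?thesis unfolding g_def using yz by (intro bexI[of _ "i+t"]) auto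
      next
        case False
        then have "z \<in> Q" using yz y unfolding Q_def by auto
        then obtain i where i: "i < m" "\<psi> i = z" using bQ by (metis atLeastLessThan_iff bij_betw_iff_bijections)
        then show ?thesis unfolding g_def using yz False by (intro bexI[of _ "i+t+t"]) auto
      qed
    qed
  qed
qed

lemma lemma6p7:
  fixes A :: "real mat" and n :: nat
  assumes "A \<in> carrier_mat n n"
    and "P_matrix A"
  shows "P_matrix (four_block_mat A (A + 1\<^sub>m n) (A - 1\<^sub>m n) A)"
proof -
  note A = assms(1)
  define M where "M = four_block_mat A (A + 1\<^sub>m n) (A - 1\<^sub>m n) A"
  have cM: "M \<in> carrier_mat (n+n) (n+n)" unfolding M_def using A by auto
  have posA: "\<And>S. S \<subseteq> {0..<n} \<Longrightarrow> S \<noteq> {} \<Longrightarrow> det (submatrix A S S) > 0"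
    using assms(2) A unfolding P_matrix_def by auto
  have hM: "M $$ (x,y) = A $$ (if x < n then x else x - n, if y < n then y else y - n)
     + (if x < n \<and> \<not> y < n \<and> y = x + n then 1 else if \<not> x < n \<and> y < n \<and> x = y + n then -1 else 0)"
    if "x < n+n" "y < n+n" for x y
    using that A unfolding M_def by auto
  {
    fix S assume S: "S \<subseteq> {0..<n+n}" and Sne: "S \<noteq> {}"
    define T where "T = {a. a < n \<and> a \<in> S \<and> a + n \<in> S}"
    define Q where "Q = {a. a < n \<and> (a \<in> S) \<noteq> (a + n \<in> S)}"
    define t where "t = card T"
    define m where "m = card Q"
    define \<tau> where "\<tau> = pick T"
    define \<psi> where "\<psi> = pick Q"
    define g where "g = (\<lambda>i. if i < t then \<tau> i else if i < t + t then \<tau> (i - t) + n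
      else if \<psi> (i - (t+t)) \<in> S then \<psi> (i - (t+t)) else \<psi> (i - (t+t)) + n)"
    have bg: "bij_betw g {0..<t+t+m} S"
      by (rule main_part[OF A S T_def Q_def t_def m_def \<tau>_def \<psi>_def g_def])
    have fT: "finite T" unfolding T_def by auto
    have fQ: "finite Q" unfolding Q_def by auto
    have bT: "bij_betw \<tau> {0..<t} T" using pick_bij[OF fT] t_def \<tau>_def by simp
    have bQ: "bij_betw \<psi> {0..<m} Q" using pick_bij[OF fQ] m_def \<psi>_def by simp
    define X where "X = mat t t (\<lambda>(i,j). A $$ (\<tau> i, \<tau> j))"
    define Y where "Y = mat t m (\<lambda>(i,j). A $$ (\<tau> i, \<psi> j))"
    define Z where "Z = mat m t (\<lambda>(i,j). A $$ (\<psi> i, \<tau> j))"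
    define W where "W = mat m m (\<lambda>(i,j). A $$ (\<psi> i, \<psi> j))"
    have cX: "X \<in> carrier_mat t t" and cY: "Y \<in> carrier_mat t m" and cZ: "Z \<in> carrier_mat m t"
      and cW: "W \<in> carrier_mat m m" unfolding X_def Y_def Z_def W_def by auto
    have tT: "i < t \<Longrightarrow> \<tau> i < n \<and> \<tau> i \<in> S \<and> \<tau> i + n \<in> S" for i
      using bij_betwE[OF bT] unfolding T_def by auto
    have tQ: "j < m \<Longrightarrow> \<psi> j < n \<and> ((\<psi> j \<in> S) \<noteq> (\<psi> j + n \<in> S))" for j
      using bij_betwE[OF bQ] unfolding Q_def by auto
    have tinj: "i < t \<Longrightarrow> j < t \<Longrightarrow> \<tau> i = \<tau> j \<longleftrightarrow> i = j" for i j
      using bij_betw_imp_inj_on[OF bT] unfolding inj_on_def by auto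
    have tne: "i < t \<Longrightarrow> j < m \<Longrightarrow> \<tau> i \<noteq> \<psi> j" for i j
      using tT tQ by metis
    have eqm: "mat (t+t+m) (t+t+m) (\<lambda>(i,j). M $$ (g i, g j)) =
      four_block_mat (four_block_mat X (X + 1\<^sub>m t) (X - 1\<^sub>m t) X)
     (four_block_mat Y (0\<^sub>m t 0) Y (0\<^sub>m t 0)) (four_block_mat Z Z (0\<^sub>m 0 t) (0\<^sub>m 0 t)) W"
    proof (rule eq_matI)
      fix i j assume i: "i < dim_row (four_block_mat (four_block_mat X (X + 1\<^sub>m t) (X - 1\<^sub>m t) X)
     (four_block_mat Y (0\<^sub>m t 0) Y (0\<^sub>m t 0)) (four_block_mat Z Z (0\<^sub>m 0 t) (0\<^sub>m 0 t)) W)"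
        and j: "j < dim_col (four_block_mat (four_block_mat X (X + 1\<^sub>m t) (X - 1\<^sub>m t) X)
     (four_block_mat Y (0\<^sub>m t 0) Y (0\<^sub>m t 0)) (four_block_mat Z Z (0\<^sub>m 0 t) (0\<^sub>m 0 t)) W)"
      have ik: "i < t+t+m" and jk: "j < t+t+m" using i j cX cW by auto
      have gi: "g i < n+n" using bij_betwE[OF bg] S ik by fastforce
      have gj: "g j < n+n" using bij_betwE[OF bg] S jk by fastforce
      show "mat (t+t+m) (t+t+m) (\<lambda>(i,j). M $$ (g i, g j)) $$ (i,j) = four_block_mat (four_block_mat X (X + 1\<^sub>m t) (X - 1\<^sub>m t) X)
     (four_block_mat Y (0\<^sub>m t 0) Y (0\<^sub>m t 0)) (four_block_mat Z Z (0\<^sub>m 0 t) (0\<^sub>m 0 t)) W $$ (i,j)"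
      proof -
        have lhs: "mat (t+t+m) (t+t+m) (\<lambda>(i,j). M $$ (g i, g j)) $$ (i,j) = M $$ (g i, g j)"
          using ik jk by simp
        have rhs: "four_block_mat (four_block_mat X (X + 1\<^sub>m t) (X - 1\<^sub>m t) X)
     (four_block_mat Y (0\<^sub>m t 0) Y (0\<^sub>m t 0)) (four_block_mat Z Z (0\<^sub>m 0 t) (0\<^sub>m 0 t)) W $$ (i,j) =
          (if i < t + t then if j < t + t then
             (if i < t then if j < t then X $$ (i,j) else (X + 1\<^sub>m t) $$ (i, j - t)
              else if j < t then (X - 1\<^sub>m t) $$ (i - t, j) else X $$ (i - t, j - t))
           else (if i < t then Y $$ (i, j - (t+t)) else Y $$ (i - t, j - (t+t)))
          else if j < t + t then (if j < t then Z $$ (i - (t+t), j) else Z $$ (i - (t+t), j - t))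
           else W $$ (i - (t+t), j - (t+t)))"
          using ik jk cX cY cZ cW by (simp, arith)
        have hMg: "M $$ (g i, g j) = A $$ (if g i < n then g i else g i - n, if g j < n then g j else g j - n)
     + (if g i < n \<and> \<not> g j < n \<and> g j = g i + n then 1 else if \<not> g i < n \<and> g j < n \<and> g i = g j + n then -1 else 0)"
          by (rule hM[OF gi gj])
        have g3: "g (a + (t+t)) = (if \<psi> a \<in> S then \<psi> a else \<psi> a + n)" for a
          unfolding g_def by simp
        have g2: "g (a + t) = \<tau> a + n" if "a < t" for a
          unfolding g_def using that by simp
        have g1: "g a = \<tau> a" if "a < t" for a
          unfolding g_def using that by simp
        have reg: "x < t \<or> (\<exists>a. a < t \<and> x = a + t) \<or> (\<exists>a. a < m \<and> x = a + (t+t))"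
          if "x < t+t+m" for x
          using that by presburger
        have ri: "P" if "i < t \<Longrightarrow> g i = \<tau> i \<Longrightarrow> P"
            "\<And>a. \<not> i < t \<Longrightarrow> i < t + t \<Longrightarrow> i - t = a \<Longrightarrow> a < t \<Longrightarrow> g i = \<tau> a + n \<Longrightarrow> P"
            "\<And>a. \<not> i < t + t \<Longrightarrow> i - (t+t) = a \<Longrightarrow> a < m \<Longrightarrow> g i = (if \<psi> a \<in> S then \<psi> a else \<psi> a + n) \<Longrightarrow> P" for P
        proof -
          consider "i < t" | a where "a < t" "i = a + t" | a where "a < m" "i = a + (t+t)"
            using reg[OF ik] by blast
          then show P
          proof cases
            case 1 then show ?thesis using that(1) g1 by blast
          next
            case 2 then show ?thesis using that(2)[of a] g2 by simp
          next
            case 3 then show ?thesis using that(3)[of a] g3 by simp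
          qed
        qed
        have rj: "P" if "j < t \<Longrightarrow> g j = \<tau> j \<Longrightarrow> P"
            "\<And>a. \<not> j < t \<Longrightarrow> j < t + t \<Longrightarrow> j - t = a \<Longrightarrow> a < t \<Longrightarrow> g j = \<tau> a + n \<Longrightarrow> P"
            "\<And>a. \<not> j < t + t \<Longrightarrow> j - (t+t) = a \<Longrightarrow> a < m \<Longrightarrow> g j = (if \<psi> a \<in> S then \<psi> a else \<psi> a + n) \<Longrightarrow> P" for P
        proof -
          consider "j < t" | a where "a < t" "j = a + t" | a where "a < m" "j = a + (t+t)"
            using reg[OF jk] by blast
          then show P
          proof cases
            case 1 then show ?thesis using that(1) g1 by blast
          next
            case 2 then show ?thesis using that(2)[of a] g2 by simp
          next
            case 3 then show ?thesis using that(3)[of a] g3 by simp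
          qed
        qed
        show ?thesis
          unfolding lhs rhs hMg
          apply (rule ri; rule rj)
          using tT tQ tinj tne tne[symmetric]
          by (auto simp: X_def Y_def Z_def W_def)
      qed
    next
      show "dim_row (mat (t+t+m) (t+t+m) (\<lambda>(i,j). M $$ (g i, g j))) = dim_row (four_block_mat (four_block_mat X (X + 1\<^sub>m t) (X - 1\<^sub>m t) X)
     (four_block_mat Y (0\<^sub>m t 0) Y (0\<^sub>m t 0)) (four_block_mat Z Z (0\<^sub>m 0 t) (0\<^sub>m 0 t)) W)"
        using cX cW by simp
      show "dim_col (mat (t+t+m) (t+t+m) (\<lambda>(i,j). M $$ (g i, g j))) = dim_col (four_block_mat (four_block_mat X (X + 1\<^sub>m t) (X - 1\<^sub>m t) X)
     (four_block_mat Y (0\<^sub>m t 0) Y (0\<^sub>m t 0)) (four_block_mat Z Z (0\<^sub>m 0 t) (0\<^sub>m 0 t)) W)"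
        using cX cW by simp
    qed
    have "det (submatrix M S S) = det (mat (t+t+m) (t+t+m) (\<lambda>(i,j). M $$ (g i, g j)))"
      by (rule det_reindex[OF cM S bg, symmetric])
    also have "\<dots> = det W" unfolding eqm by (rule block_det[OF cX cY cZ cW])
    also have "det W > 0"
    proof (cases "Q = {}")
      case True
      then have "m = 0" unfolding m_def by simp
      then have "W = 1\<^sub>m 0" using cW by (auto intro!: eq_matI)
      then show ?thesis by simp
    next
      case False
      have "det W = det (submatrix A Q Q)" unfolding W_def
        by (rule det_reindex[OF A _ bQ], auto simp: Q_def)
      moreover have "Q \<subseteq> {0..<n}" unfolding Q_def by auto
      ultimately show ?thesis using posA[OF _ False] by simp
    qed
    finally have "det (submatrix M S S) > 0" .
  }
  moreover have "dim_row A = n" using A by simp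
  ultimately show ?thesis using cM unfolding P_matrix_def M_def by auto
qed

end
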